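(* Let $d\ge1$, consider the Gaussian broadcast model on $P=\mathbb Z_{\ge0}^{d+1}$ with $\alpha_i\in(0,1/i]$ for every $i\in\{1,\dots,d+1\}$, fix $t\ge0$ and reals $a_u$ ($u\in L_t$), not all zero, and let $\zeta=\sum_{u\in L_t}a_uX_u$. Extend $a$ to all $v\in L_m$, $0\le m\le t$, by $a_v:=\sum_{u\in L_t}p(v\to u)\,a_u$. Then (a) $\operatorname{Var}(\zeta)=a_{\mathbf 0}^2+\sum_{m=1}^t\sum_{w\in L_m}|\mathfrak p(w)|\,\alpha_{|\mathfrak p(w)|}^2\,a_w^2$; (b) $\frac1{C^2}\sum_{m=0}^t\sum_{v\in L_m}a_v^2\le\operatorname{Var}(\zeta)\le\sum_{m=0}^t\sum_{v\in L_m}a_v^2$, where $C:=\max_{i\in[d+1]}i^{-1/2}\alpha_i^{-1}$.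
   Context: Gaussian broadcast model on the finite model: $P=\mathbb{Z}_{\ge0}^{d+1}$ with $u\le v$ iff $v-u\in\mathbb{Z}_{\ge0}^{d+1}$; $L_t$ = tuples with coordinate sum $t$; $\mathfrak p(v)$ = set of elements covered by $v$ (the $v-e_i$ with $v_i>0$), so $|\mathfrak p(v)|$ is the number of positive coordinates; $\mathbf 0$ is the minimal element. Let $X_0\sim\mathcal N(0,1)$, independently i.i.d. $W_{u\to v}\sim\mathcal N(0,1)$ for covering pairs $u\lessdot v$, $X_{\mathbf 0}=X_0$, and $X_v=\alpha_{|\mathfrak p(v)|}\sum_{u\in\mathfrak p(v)}(X_u+W_{u\to v})$ for $v\ne\mathbf 0$. Path weights: each covering pair $u\lessdot v$ gives a directed edge $u\to v$ of weight $\alpha_{|\mathfrak p(v)|}$; for $u,v\in P$, $p(u\to v)$ is the sum over all directed paths (saturated chains) from $u$ to $v$ of the product of edge weights, with $p(v\to v)=1$ and $p(u\to v)=0$ if $u\not\le v$. *)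

theory Defs
  imports "HOL-Probability.Probability"
begin

text \<open>Elements of P = Z_{>=0}^{d+1} are represented as lists of naturals of length d+1.
  The partial order is coordinatewise; covering pairs are u = v - e_i with v_i > 0.\<close>

definition pos_coords :: "nat list \<Rightarrow> nat set" where
  "pos_coords v = {i. i < length v \<and> 0 < v ! i}"

definition parents :: "nat list \<Rightarrow> nat list set" where
  "parents v = (\<lambda>i. v[i := v ! i - 1]) ` pos_coords v"

definition level :: "nat \<Rightarrow> nat \<Rightarrow> nat list set" where
  "level d t = {v. length v = Suc d \<and> sum_list v = t}"

lemma parents_sum_less:
  assumes "u \<in> parents v" shows "sum_list u < sum_list v"
proof -
  obtain i where i: "i < length v" "0 < v ! i" and u: "u = v[i := v ! i - 1]"
    using assms by (auto simp: parents_def pos_coords_def)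
  have "sum_list v = sum_list (take i v) + v ! i + sum_list (drop (Suc i) v)"
    using i by (metis id_take_nth_drop sum_list.Cons sum_list_append add.assoc)
  moreover have "sum_list u = sum_list (take i v) + (v ! i - 1) + sum_list (drop (Suc i) v)"
    using i unfolding u by (simp add: upd_conv_take_nth_drop)
  ultimately show ?thesis using i by simp
qed

function Xproc :: "(nat \<Rightarrow> real) \<Rightarrow> ('a \<Rightarrow> real) \<Rightarrow> (nat list \<times> nat list \<Rightarrow> 'a \<Rightarrow> real)
    \<Rightarrow> nat list \<Rightarrow> 'a \<Rightarrow> real" where
  "Xproc \<alpha> X0 W v \<omega> =
     (if sum_list v = 0 then X0 \<omega>
      else \<alpha> (card (parents v)) * (\<Sum>u\<in>parents v. Xproc \<alpha> X0 W u \<omega> + W (u, v) \<omega>))"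
  by pat_completeness auto
termination
  by (relation "Wellfounded.measure (\<lambda>(\<alpha>, X0, W, v, \<omega>). sum_list v)") (auto intro: parents_sum_less)

declare Xproc.simps[simp del]

definition chains :: "nat list \<Rightarrow> nat list \<Rightarrow> nat list list set" where
  "chains u v = {xs. xs \<noteq> [] \<and> hd xs = u \<and> last xs = v \<and>
      (\<forall>i. Suc i < length xs \<longrightarrow> xs ! i \<in> parents (xs ! Suc i))}"

definition chain_weight :: "(nat \<Rightarrow> real) \<Rightarrow> nat list list \<Rightarrow> real" where
  "chain_weight \<alpha> xs = (\<Prod>i<length xs - 1. \<alpha> (card (parents (xs ! Suc i))))"

definition path_weight :: "(nat \<Rightarrow> real) \<Rightarrow> nat list \<Rightarrow> nat list \<Rightarrow> real" where
  "path_weight \<alpha> u v = (\<Sum>xs\<in>chains u v. chain_weight \<alpha> xs)"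

definition edges :: "nat \<Rightarrow> (nat list \<times> nat list) set" where
  "edges d = {(u, v). length v = Suc d \<and> u \<in> parents v}"

end

theory Submission
  imports Defs
begin


context prob_space begin

lemma stdn_facts:
  assumes D: "distributed M lborel X std_normal_density"
  shows "integrable M X" "integrable M (\<lambda>x. (X x)\<^sup>2)" "expectation X = 0"
    "expectation (\<lambda>x. (X x)\<^sup>2) = 1"
proof -
  have nn: "\<And>x. 0 \<le> std_normal_density x" by (simp add: normal_density_nonneg)
  show "integrable M X"
    using distributed_integrable[OF D, of "\<lambda>x. x"] integrable_std_normal_moment[of 1] nn by simp
  show "integrable M (\<lambda>x. (X x)\<^sup>2)"
    using distributed_integrable[OF D, of "\<lambda>x. x^2"] integrable_std_normal_moment[of 2] nn by simp
  show "expectation X = 0" using standard_normal_distributed_expectation[OF D] .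
  have "expectation (\<lambda>x. (X x)\<^sup>2) = integral\<^sup>L lborel (\<lambda>x. std_normal_density x * x^(2*1))"
    using distributed_integral[OF D, of "\<lambda>x. x^2"] nn by simp
  also have "\<dots> = 1" by (subst integral_std_normal_moment_even) (simp add: eval_nat_numeral)
  finally show "expectation (\<lambda>x. (X x)\<^sup>2) = 1" .
qed

lemma indep_pair:
  assumes ind: "indep_vars (\<lambda>_. borel) Y I" and ij: "i \<in> I" "j \<in> I" "i \<noteq> j"
  shows "indep_var borel (Y i) borel (Y j)"
proof -
  have "indep_var (PiM {i} (\<lambda>_. borel)) (\<lambda>\<omega>. restrict (\<lambda>k. Y k \<omega>) {i})
                  (PiM {j} (\<lambda>_. borel)) (\<lambda>\<omega>. restrict (\<lambda>k. Y k \<omega>) {j})"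
    using ij by (intro indep_var_restrict[OF ind]) auto
  from indep_var_compose[OF this, of "\<lambda>f. f i" borel "\<lambda>f. f j" borel]
  show ?thesis by (simp add: comp_def)
qed

lemma var_indep_normal_sum:
  fixes Y :: "'i \<Rightarrow> 'a \<Rightarrow> real"
  assumes fin: "finite I" and ind: "indep_vars (\<lambda>_. borel) Y I"
    and D: "\<And>i. i \<in> I \<Longrightarrow> distributed M lborel (Y i) std_normal_density"
  shows "variance (\<lambda>\<omega>. \<Sum>i\<in>I. b i * Y i \<omega>) = (\<Sum>i\<in>I. (b i)\<^sup>2)"
proof -
  have intY: "\<And>i. i \<in> I \<Longrightarrow> integrable M (Y i)" using stdn_facts(1)[OF D] .
  have prod: "integrable M (\<lambda>\<omega>. Y i \<omega> * Y j \<omega>) \<and>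
     expectation (\<lambda>\<omega>. Y i \<omega> * Y j \<omega>) = (if i = j then 1 else 0)" if "i \<in> I" "j \<in> I" for i j
  proof (cases "i = j")
    case True
    then show ?thesis using stdn_facts(2,4)[OF D[OF \<open>i\<in>I\<close>]] by (simp add: power2_eq_square)
  next
    case False
    have iv: "indep_var borel (Y i) borel (Y j)" using indep_pair[OF ind that False] .
    show ?thesis using indep_var_integrable[OF iv intY intY] indep_var_lebesgue_integral[OF iv intY intY]
        stdn_facts(3)[OF D] that False by simp
  qed
  have E0: "expectation (\<lambda>\<omega>. \<Sum>i\<in>I. b i * Y i \<omega>) = 0"
    using intY stdn_facts(3)[OF D] by (simp add: Bochner_Integration.integral_sum)
  have sq: "(\<lambda>\<omega>. (\<Sum>i\<in>I. b i * Y i \<omega>)\<^sup>2) = (\<lambda>\<omega>. \<Sum>i\<in>I. \<Sum>j\<in>I. b i * b j * (Y i \<omega> * Y j \<omega>))"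
    by (auto simp: power2_eq_square sum_product algebra_simps)
  have "expectation (\<lambda>\<omega>. (\<Sum>i\<in>I. b i * Y i \<omega>)\<^sup>2) = (\<Sum>i\<in>I. \<Sum>j\<in>I. b i * b j * (if i = j then 1 else 0))"
    unfolding sq using prod by (simp add: Bochner_Integration.integral_sum)
  also have "\<dots> = (\<Sum>i\<in>I. (b i)\<^sup>2)"
    using fin by (simp add: power2_eq_square if_distrib[of "(*) _"] sum.delta cong: if_cong)
  finally show ?thesis using E0 by (simp add: variance_mean_zero)
qed
end


lemma parents_len: "u \<in> parents v \<Longrightarrow> length u = length v"
  by (auto simp: parents_def)

lemma parents_sum: assumes "u \<in> parents v" shows "Suc (sum_list u) = sum_list v"
proof -
  obtain i where i: "i < length v" "0 < v ! i" and u: "u = v[i := v ! i - 1]"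
    using assms by (auto simp: parents_def pos_coords_def)
  have "sum_list v = sum_list (take i v) + v ! i + sum_list (drop (Suc i) v)"
    using i by (metis id_take_nth_drop sum_list.Cons sum_list_append add.assoc)
  moreover have "sum_list u = sum_list (take i v) + (v ! i - 1) + sum_list (drop (Suc i) v)"
    using i unfolding u by (simp add: upd_conv_take_nth_drop)
  ultimately show ?thesis using i by simp
qed

lemma finite_parents: "finite (parents v)"
  by (auto simp: parents_def pos_coords_def)

lemma card_parents_le: "card (parents v) \<le> length v"
proof -
  have "card (parents v) \<le> card (pos_coords v)" unfolding parents_def by (rule card_image_le) (auto simp: pos_coords_def)
  also have "\<dots> \<le> card {..<length v}" by (rule card_mono) (auto simp: pos_coords_def)
  finally show ?thesis by simp
qed

lemma parents_nonempty: assumes "sum_list v > 0" shows "parents v \<noteq> {}"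
proof -
  obtain x where "x \<in> set v" "x \<noteq> 0" using assms by (metis sum_list_eq_0_iff less_irrefl)
  then obtain i where "i < length v" "v ! i > 0" by (metis gr0I in_set_conv_nth)
  then show ?thesis by (auto simp: parents_def pos_coords_def)
qed

lemma chain_sum:
  assumes "xs \<in> chains u v" "i < length xs"
  shows "sum_list (xs ! i) = sum_list u + i"
  using assms(2)
proof (induction i)
  case 0
  then show ?case using assms(1) by (auto simp: chains_def hd_conv_nth)
next
  case (Suc i)
  then have "xs ! i \<in> parents (xs ! Suc i)" using assms(1) by (auto simp: chains_def)
  from parents_sum[OF this] Suc show ?case by simp
qed

lemma chain_sum_last:
  assumes "xs \<in> chains u v" shows "sum_list v = sum_list u + (length xs - 1)"
proof -
  have "xs \<noteq> []" "last xs = v" using assms by (auto simp: chains_def)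
  then show ?thesis using chain_sum[OF assms, of "length xs - 1"] by (simp add: last_conv_nth)
qed

lemma chains_self: "chains v v = {[v]}"
proof
  show "{[v]} \<subseteq> chains v v" by (auto simp: chains_def)
  show "chains v v \<subseteq> {[v]}"
  proof
    fix xs assume xs: "xs \<in> chains v v"
    then have "xs \<noteq> []" by (auto simp: chains_def)
    then have "length xs = 1" using chain_sum_last[OF xs] by (cases xs) auto
    then obtain y where "xs = [y]" by (metis One_nat_def length_0_conv length_Suc_conv)
    then show "xs \<in> {[v]}" using xs by (auto simp: chains_def)
  qed
qed

lemma chains_empty: "sum_list v < sum_list x \<Longrightarrow> chains x v = {}"
  using chain_sum_last by fastforce

lemma chains_step:
  assumes "x \<noteq> v"
  shows "chains x v = (\<Union>u\<in>parents v. (\<lambda>ys. ys @ [v]) ` chains x u)"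
proof
  show "chains x v \<subseteq> (\<Union>u\<in>parents v. (\<lambda>ys. ys @ [v]) ` chains x u)"
  proof
    fix xs assume xs: "xs \<in> chains x v"
    have ne: "xs \<noteq> []" and hd: "hd xs = x" and lst: "last xs = v"
      and ch: "\<And>i. Suc i < length xs \<Longrightarrow> xs ! i \<in> parents (xs ! Suc i)"
      using xs by (auto simp: chains_def)
    have "length xs \<noteq> 1"
    proof
      assume "length xs = 1"
      then obtain y where "xs = [y]" by (metis One_nat_def length_0_conv length_Suc_conv)
      then show False using hd lst assms by simp
    qed
    then obtain ys where ys: "xs = ys @ [v]" "ys \<noteq> []" using ne lst
      by (metis append_butlast_last_id append_Nil length_Cons list.size(3) One_nat_def)
    have sl: "Suc (length ys - 1) = length ys" using ys(2) by simp
    have "xs ! (length ys - 1) \<in> parents (xs ! Suc (length ys - 1))"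
      by (rule ch) (use ys sl in simp)
    moreover have "xs ! (length ys - 1) = last ys" using ys by (simp add: nth_append last_conv_nth)
    moreover have "xs ! Suc (length ys - 1) = v" unfolding sl using ys by simp
    ultimately have lp: "last ys \<in> parents v" by simp
    have "ys \<in> chains x (last ys)"
      unfolding chains_def
    proof (intro CollectI conjI allI impI)
      show "hd ys = x" using ys hd by simp
      fix i assume i: "Suc i < length ys"
      have "xs ! i \<in> parents (xs ! Suc i)" by (rule ch) (use i ys in simp)
      moreover have "xs ! i = ys ! i" "xs ! Suc i = ys ! Suc i" using i ys(1) by (simp_all add: nth_append)
      ultimately show "ys ! i \<in> parents (ys ! Suc i)" by simp
    qed (use ys in auto)
    then show "xs \<in> (\<Union>u\<in>parents v. (\<lambda>ys. ys @ [v]) ` chains x u)" using lp ys by blast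
  qed
  show "(\<Union>u\<in>parents v. (\<lambda>ys. ys @ [v]) ` chains x u) \<subseteq> chains x v"
  proof safe
    fix u ys assume u: "u \<in> parents v" and ys: "ys \<in> chains x u"
    have ne: "ys \<noteq> []" and hd: "hd ys = x" and lst: "last ys = u"
      and ch: "\<And>i. Suc i < length ys \<Longrightarrow> ys ! i \<in> parents (ys ! Suc i)"
      using ys by (auto simp: chains_def)
    show "ys @ [v] \<in> chains x v" unfolding chains_def
    proof (intro CollectI conjI allI impI)
      fix i assume i: "Suc i < length (ys @ [v])"
      show "(ys @ [v]) ! i \<in> parents ((ys @ [v]) ! Suc i)"
      proof (cases "Suc i < length ys")
        case True then show ?thesis using ch by (simp add: nth_append)
      next
        case False
        then have "i = length ys - 1" using i by simp
        then show ?thesis using ne lst u False by (simp add: nth_append last_conv_nth)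
      qed
    qed (use ne hd in auto)
  qed
qed

lemma finite_chains: "finite (chains x v)"
proof (induction "sum_list v" arbitrary: v rule: less_induct)
  case less
  show ?case
  proof (cases "x = v")
    case True then show ?thesis by (simp add: chains_self)
  next
    case False
    have "\<And>u. u \<in> parents v \<Longrightarrow> finite (chains x u)"
      using less parents_sum by (metis lessI)
    then show ?thesis unfolding chains_step[OF False] using finite_parents by blast
  qed
qed

lemma pw_self: "path_weight \<alpha> v v = 1"
  by (simp add: path_weight_def chains_self chain_weight_def)

lemma pw_zero: "sum_list v < sum_list x \<Longrightarrow> path_weight \<alpha> x v = 0"
  by (simp add: path_weight_def chains_empty)

lemma chain_weight_snoc:
  assumes "ys \<noteq> []"
  shows "chain_weight \<alpha> (ys @ [v]) = chain_weight \<alpha> ys * \<alpha> (card (parents v))"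
proof -
  obtain k where k: "length ys = Suc k" using assms by (cases ys) auto
  have "chain_weight \<alpha> (ys @ [v]) = (\<Prod>i<Suc k. \<alpha> (card (parents ((ys @ [v]) ! Suc i))))"
    by (simp add: chain_weight_def k)
  also have "\<dots> = (\<Prod>i<k. \<alpha> (card (parents ((ys @ [v]) ! Suc i)))) * \<alpha> (card (parents v))"
    using k by (simp add: nth_append)
  also have "(\<Prod>i<k. \<alpha> (card (parents ((ys @ [v]) ! Suc i)))) = chain_weight \<alpha> ys"
    unfolding chain_weight_def k by (intro prod.cong) (auto simp: nth_append k)
  finally show ?thesis .
qed

lemma sum_snoc: "(\<Sum>xs\<in>(\<lambda>ys. ys @ [v]) ` chains x u. chain_weight \<alpha> xs) = (\<Sum>ys\<in>chains x u. chain_weight \<alpha> ys * \<alpha> (card (parents v)))"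
proof -
  have "(\<Sum>xs\<in>(\<lambda>ys. ys @ [v]) ` chains x u. chain_weight \<alpha> xs) = (\<Sum>ys\<in>chains x u. chain_weight \<alpha> (ys @ [v]))"
    by (subst sum.reindex) (auto simp: inj_on_def)
  also have "\<dots> = (\<Sum>ys\<in>chains x u. chain_weight \<alpha> ys * \<alpha> (card (parents v)))"
    by (intro sum.cong refl) (auto simp: chains_def chain_weight_snoc)
  finally show ?thesis .
qed

lemma pw_step:
  assumes "x \<noteq> v"
  shows "path_weight \<alpha> x v = \<alpha> (card (parents v)) * (\<Sum>u\<in>parents v. path_weight \<alpha> x u)"
proof -
  have disj: "\<And>u u'. u \<in> parents v \<Longrightarrow> u' \<in> parents v \<Longrightarrow> u \<noteq> u' \<Longrightarrow>
      (\<lambda>ys. ys @ [v]) ` chains x u \<inter> (\<lambda>ys. ys @ [v]) ` chains x u' = {}"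
    by (auto simp: chains_def)
  have "path_weight \<alpha> x v = (\<Sum>u\<in>parents v. \<Sum>xs\<in>(\<lambda>ys. ys @ [v]) ` chains x u. chain_weight \<alpha> xs)"
    unfolding path_weight_def chains_step[OF assms]
    by (rule sum.UNION_disjoint) (use finite_parents finite_chains disj in auto)
  also have "\<dots> = (\<Sum>u\<in>parents v. \<Sum>ys\<in>chains x u. chain_weight \<alpha> ys * \<alpha> (card (parents v)))"
    by (rule sum.cong[OF refl], rule sum_snoc)
  also have "\<dots> = \<alpha> (card (parents v)) * (\<Sum>u\<in>parents v. path_weight \<alpha> x u)"
    by (simp add: path_weight_def sum_distrib_left sum_distrib_right mult.commute)
  finally show ?thesis .
qed



definition ET :: "nat \<Rightarrow> nat \<Rightarrow> (nat list \<times> nat list) set" where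
  "ET d T = {(u, w). length w = Suc d \<and> u \<in> parents w \<and> sum_list w \<le> T}"

definition KT :: "nat \<Rightarrow> nat \<Rightarrow> (nat list \<times> nat list) option set" where
  "KT d T = insert None (Some ` ET d T)"

definition coef :: "(nat \<Rightarrow> real) \<Rightarrow> nat \<Rightarrow> nat list \<Rightarrow> (nat list \<times> nat list) option \<Rightarrow> real" where
  "coef \<alpha> d v k = (case k of None \<Rightarrow> path_weight \<alpha> (replicate (Suc d) 0) v
      | Some (u, w) \<Rightarrow> \<alpha> (card (parents w)) * path_weight \<alpha> w v)"

lemma finite_bounded_lists: "finite {w :: nat list. length w = n \<and> sum_list w \<le> T}"
proof (rule finite_subset)
  show "{w :: nat list. length w = n \<and> sum_list w \<le> T} \<subseteq> {xs. set xs \<subseteq> {0..T} \<and> length xs = n}"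
    using member_le_sum_list by fastforce
  show "finite {xs. set xs \<subseteq> {0..T} \<and> length xs = n}" by (rule finite_lists_length_eq) simp
qed

lemma finite_level: "finite (level d m)"
  by (rule finite_subset[OF _ finite_bounded_lists[of "Suc d" m]]) (auto simp: level_def)

lemma zero_vec: fixes v :: "nat list" assumes "length v = Suc d" "sum_list v = 0" shows "v = replicate (Suc d) 0"
proof -
  have "\<forall>x\<in>set v. x = 0" using assms(2) by simp
  then have "replicate (length v) 0 = v" by (rule replicate_length_same)
  then show ?thesis using assms(1) by simp
qed

lemma level0: "level d 0 = {replicate (Suc d) 0}"
proof (intro set_eqI iffI)
  fix v assume "v \<in> level d 0"
  then show "v \<in> {replicate (Suc d) 0}" using zero_vec[of v d] by (simp add: level_def)
next
  fix v :: "nat list" assume "v \<in> {replicate (Suc d) 0}"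
  then show "v \<in> level d 0" by (simp add: level_def)
qed

lemma finite_ET: "finite (ET d T)"
proof (rule finite_subset)
  show "ET d T \<subseteq> (\<lambda>(w, u). (u, w)) ` (SIGMA w:{w. length w = Suc d \<and> sum_list w \<le> T}. parents w)"
    by (auto simp: ET_def image_iff)
  show "finite ((\<lambda>(w, u). (u, w)) ` (SIGMA w:{w. length w = Suc d \<and> sum_list w \<le> T}. parents w))"
    by (intro finite_imageI finite_SigmaI finite_bounded_lists finite_parents)
qed

lemma finite_KT: "finite (KT d T)" by (simp add: KT_def finite_ET)

lemma rep:
  assumes "length v = Suc d" "sum_list v \<le> T"
  shows "Xproc \<alpha> X0 W v \<omega> = (\<Sum>k\<in>KT d T. coef \<alpha> d v k * (case k of None \<Rightarrow> X0 | Some e \<Rightarrow> W e) \<omega>)"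
  using assms
proof (induction "sum_list v" arbitrary: v rule: less_induct)
  case less
  let ?z = "replicate (Suc d) 0"
  let ?Y = "\<lambda>k. (case k of None \<Rightarrow> X0 | Some e \<Rightarrow> W e)"
  have fin: "finite (Some ` ET d T)" by (simp add: finite_ET)
  show ?case
  proof (cases "sum_list v = 0")
    case True
    then have vz: "v = ?z" using zero_vec less.prems by blast
    have 0: "coef \<alpha> d v k = 0" if kin: "k \<in> Some ` ET d T" for k
    proof -
      obtain u w where k: "k = Some (u, w)" "u \<in> parents w" using kin by (auto simp: ET_def)
      have "sum_list v < sum_list w" using parents_sum[OF k(2)] True by linarith
      then show ?thesis by (simp add: coef_def k pw_zero)
    qed
    have "(\<Sum>k\<in>KT d T. coef \<alpha> d v k * ?Y k \<omega>) = coef \<alpha> d v None * X0 \<omega>"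
      unfolding KT_def using fin 0 by (subst sum.insert) auto
    also have "\<dots> = X0 \<omega>" by (simp add: coef_def vz pw_self)
    finally show ?thesis using True by (simp add: Xproc.simps)
  next
    case False
    define P where "P = parents v"
    define a where "a = \<alpha> (card P)"
    define S where "S = (\<lambda>u. Some (u, v)) ` P"
    have finP: "finite P" by (simp add: P_def finite_parents)
    have IH: "Xproc \<alpha> X0 W u \<omega> = (\<Sum>k\<in>KT d T. coef \<alpha> d u k * ?Y k \<omega>)" if "u \<in> P" for u
    proof -
      have s: "Suc (sum_list u) = sum_list v" using parents_sum that P_def by blast
      show ?thesis
        by (rule less.hyps) (use s that less.prems parents_len P_def in auto)
    qed
    have SK: "S \<subseteq> KT d T" using less.prems False by (auto simp: S_def KT_def ET_def P_def)
    have key: "coef \<alpha> d v k = a * (\<Sum>u\<in>P. coef \<alpha> d u k) + (if k \<in> S then a else 0)"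
      if "k \<in> KT d T" for k
    proof (cases k)
      case None
      have "?z \<noteq> v" using False by auto
      moreover have "k \<notin> S" using None by (auto simp: S_def)
      ultimately show ?thesis using None by (simp add: coef_def pw_step a_def P_def)
    next
      case (Some e)
      obtain u' w where e: "e = (u', w)" by force
      have u': "u' \<in> parents w" using \<open>k \<in> KT d T\<close> Some e by (auto simp: KT_def ET_def)
      show ?thesis
      proof (cases "w = v")
        case True
        have "path_weight \<alpha> v u = 0" if "u \<in> P" for u
          using pw_zero parents_sum that P_def by (metis lessI)
        then show ?thesis using True Some e u' by (simp add: coef_def pw_self S_def a_def P_def)
      next
        case wv: False
        have "k \<notin> S" using wv Some e by (auto simp: S_def)
        then show ?thesis using Some e wv
          by (simp add: coef_def pw_step[OF wv] a_def P_def sum_distrib_left mult.left_commute)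
      qed
    qed
    have "(\<Sum>k\<in>KT d T. coef \<alpha> d v k * ?Y k \<omega>) =
        (\<Sum>k\<in>KT d T. a * (\<Sum>u\<in>P. coef \<alpha> d u k) * ?Y k \<omega>) + (\<Sum>k\<in>KT d T. (if k \<in> S then a else 0) * ?Y k \<omega>)"
      by (simp add: key distrib_right sum.distrib)
    also have "(\<Sum>k\<in>KT d T. a * (\<Sum>u\<in>P. coef \<alpha> d u k) * ?Y k \<omega>) = a * (\<Sum>u\<in>P. Xproc \<alpha> X0 W u \<omega>)"
      by (simp add: IH sum_distrib_left sum_distrib_right sum.swap[of _ P] mult.assoc)
    also have "(\<Sum>k\<in>KT d T. (if k \<in> S then a else 0) * ?Y k \<omega>) = (\<Sum>k\<in>S. a * ?Y k \<omega>)"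
    proof -
      have "(\<Sum>k\<in>KT d T. (if k \<in> S then a else 0) * ?Y k \<omega>) = (\<Sum>k\<in>KT d T. if k \<in> S then a * ?Y k \<omega> else 0)"
        by (intro sum.cong) auto
      also have "\<dots> = (\<Sum>k\<in>KT d T \<inter> S. a * ?Y k \<omega>)" by (rule sum.inter_restrict[symmetric]) (simp add: finite_KT)
      also have "KT d T \<inter> S = S" using SK by blast
      finally show ?thesis .
    qed
    also have "\<dots> = (\<Sum>u\<in>P. a * W (u, v) \<omega>)"
      unfolding S_def by (subst sum.reindex) (auto simp: inj_on_def)
    finally have R: "(\<Sum>k\<in>KT d T. coef \<alpha> d v k * ?Y k \<omega>) = a * (\<Sum>u\<in>P. Xproc \<alpha> X0 W u \<omega>) + (\<Sum>u\<in>P. a * W (u, v) \<omega>)" .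
    have L: "Xproc \<alpha> X0 W v \<omega> = a * (\<Sum>u\<in>P. Xproc \<alpha> X0 W u \<omega> + W (u, v) \<omega>)"
      using False by (subst Xproc.simps) (simp only: a_def P_def if_False)
    show ?thesis unfolding L R by (simp add: sum.distrib sum_distrib_left distrib_left)
  qed
qed



lemma ET_eq: "ET d t = (\<lambda>(w, u). (u, w)) ` (SIGMA w:(\<Union>m\<in>{1..t}. level d m). parents w)"
proof (intro set_eqI iffI)
  fix e assume "e \<in> ET d t"
  then obtain u w where e: "e = (u, w)" "length w = Suc d" "u \<in> parents w" "sum_list w \<le> t"
    by (auto simp: ET_def)
  have "1 \<le> sum_list w" using parents_sum[OF e(3)] by linarith
  then have "w \<in> (\<Union>m\<in>{1..t}. level d m)" using e by (auto simp: level_def)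
  then show "e \<in> (\<lambda>(w, u). (u, w)) ` (SIGMA w:(\<Union>m\<in>{1..t}. level d m). parents w)"
    using e by (auto simp: image_iff)
next
  fix e assume "e \<in> (\<lambda>(w, u). (u, w)) ` (SIGMA w:(\<Union>m\<in>{1..t}. level d m). parents w)"
  then show "e \<in> ET d t" by (auto simp: ET_def level_def)
qed

lemma sum_ET:
  "(\<Sum>e\<in>ET d t. g (snd e)) = (\<Sum>m\<in>{1..t}. \<Sum>w\<in>level d m. real (card (parents w)) * g w)"
proof -
  let ?U = "\<Union>m\<in>{1..t}. level d m"
  have finU: "finite ?U" by (simp add: finite_level)
  have "(\<Sum>e\<in>ET d t. g (snd e)) = (\<Sum>x\<in>(SIGMA w:?U. parents w). g (fst x))"
    unfolding ET_eq by (subst sum.reindex) (auto simp: inj_on_def split_beta)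
  also have "\<dots> = (\<Sum>w\<in>?U. \<Sum>u\<in>parents w. g w)"
    by (subst sum.Sigma) (auto simp: finU finite_parents finite_level split_beta)
  also have "\<dots> = (\<Sum>w\<in>?U. real (card (parents w)) * g w)" by simp
  also have "\<dots> = (\<Sum>m\<in>{1..t}. \<Sum>w\<in>level d m. real (card (parents w)) * g w)"
    by (rule sum.UNION_disjoint) (auto simp: finite_level, auto simp: level_def)
  finally show ?thesis .
qed

lemma card_parents_range:
  assumes "w \<in> level d m" "1 \<le> m" shows "card (parents w) \<in> {1..d+1}"
proof -
  have "parents w \<noteq> {}" using assms parents_nonempty by (auto simp: level_def)
  then have "card (parents w) \<ge> 1" using finite_parents by (simp add: Suc_le_eq card_gt_0_iff)
  moreover have "card (parents w) \<le> d + 1" using card_parents_le[of w] assms by (simp add: level_def)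
  ultimately show ?thesis by simp
qed


lemma C_bounds:
  fixes \<alpha> :: "nat \<Rightarrow> real"
  assumes alpha: "\<And>i. i \<in> {1..d+1} \<Longrightarrow> 0 < \<alpha> i \<and> \<alpha> i \<le> 1 / real i"
    and C: "C = Max ((\<lambda>i. 1 / (sqrt (real i) * \<alpha> i)) ` {1..d+1})"
  shows "1 / C\<^sup>2 \<le> 1" "\<And>p. p \<in> {1..d+1} \<Longrightarrow> 1 / C\<^sup>2 \<le> real p * (\<alpha> p)\<^sup>2"
    "\<And>p. p \<in> {1..d+1} \<Longrightarrow> real p * (\<alpha> p)\<^sup>2 \<le> 1"
proof -
  have Cge: "1 / (sqrt (real p) * \<alpha> p) \<le> C" if "p \<in> {1..d+1}" for p
    unfolding C by (rule Max_ge) (use that in auto)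
  have low: "1 / C\<^sup>2 \<le> real p * (\<alpha> p)\<^sup>2" if p: "p \<in> {1..d+1}" for p
  proof -
    have ap: "0 < \<alpha> p" using alpha p by auto
    have pp: "0 < real p" using p by auto
    have q: "0 < 1 / (sqrt (real p) * \<alpha> p)" using ap pp by simp
    have "(1 / (sqrt (real p) * \<alpha> p))\<^sup>2 \<le> C\<^sup>2"
      using Cge[OF p] q by (intro power_mono) auto
    moreover have "(1 / (sqrt (real p) * \<alpha> p))\<^sup>2 = 1 / (real p * (\<alpha> p)\<^sup>2)"
      using pp by (simp add: power_mult_distrib power_divide)
    ultimately have "1 / (real p * (\<alpha> p)\<^sup>2) \<le> C\<^sup>2" by simp
    moreover have xp: "0 < real p * (\<alpha> p)\<^sup>2" using ap pp by simp
    ultimately have "inverse (C\<^sup>2) \<le> inverse (1 / (real p * (\<alpha> p)\<^sup>2))"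
      by (intro le_imp_inverse_le) auto
    then show ?thesis by (simp add: inverse_eq_divide)
  qed
  show "\<And>p. p \<in> {1..d+1} \<Longrightarrow> 1 / C\<^sup>2 \<le> real p * (\<alpha> p)\<^sup>2" by (rule low)
  show up: "real p * (\<alpha> p)\<^sup>2 \<le> 1" if p: "p \<in> {1..d+1}" for p
  proof -
    have ap: "0 < \<alpha> p" "\<alpha> p \<le> 1 / real p" using alpha p by auto
    have pp: "1 \<le> real p" using p by auto
    have "(\<alpha> p)\<^sup>2 \<le> (1 / real p)\<^sup>2" using ap by (intro power_mono) auto
    then have "real p * (\<alpha> p)\<^sup>2 \<le> real p * (1 / real p)\<^sup>2" using pp by (intro mult_left_mono) auto
    also have "\<dots> = 1 / real p" using pp by (simp add: power2_eq_square)
    also have "\<dots> \<le> 1" using pp by simp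
    finally show ?thesis .
  qed
  have "1 / C\<^sup>2 \<le> real 1 * (\<alpha> 1)\<^sup>2" by (rule low) auto
  also have "\<dots> \<le> 1" by (rule up) auto
  finally show "1 / C\<^sup>2 \<le> 1" .
qed

theorem mainTheorem7:
  fixes M :: "'s measure" and X0 :: "'s \<Rightarrow> real"
    and W :: "nat list \<times> nat list \<Rightarrow> 's \<Rightarrow> real"
    and \<alpha> :: "nat \<Rightarrow> real" and d t :: nat and a :: "nat list \<Rightarrow> real"
  assumes "prob_space M"
    and "d \<ge> 1"
    and alpha: "\<And>i. i \<in> {1..d+1} \<Longrightarrow> 0 < \<alpha> i \<and> \<alpha> i \<le> 1 / real i"
    and indep: "prob_space.indep_vars M (\<lambda>_. borel)
                  (\<lambda>k. case k of None \<Rightarrow> X0 | Some e \<Rightarrow> W e) (insert None (Some ` edges d))"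
    and X0_normal: "distributed M lborel X0 std_normal_density"
    and W_normal: "\<And>e. e \<in> edges d \<Longrightarrow> distributed M lborel (W e) std_normal_density"
    and nonzero: "\<exists>u\<in>level d t. a u \<noteq> 0"
  defines "\<zeta> \<equiv> (\<lambda>\<omega>. \<Sum>u\<in>level d t. a u * Xproc \<alpha> X0 W u \<omega>)"
    and "ae \<equiv> (\<lambda>v. \<Sum>u\<in>level d t. path_weight \<alpha> v u * a u)"
    and "C \<equiv> Max ((\<lambda>i. 1 / (sqrt (real i) * \<alpha> i)) ` {1..d+1})"
  shows "prob_space.variance M \<zeta> =
           (ae (replicate (d+1) 0))\<^sup>2 +
           (\<Sum>m\<in>{1..t}. \<Sum>w\<in>level d m.
              real (card (parents w)) * (\<alpha> (card (parents w)))\<^sup>2 * (ae w)\<^sup>2) \<and>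
         1 / C\<^sup>2 * (\<Sum>m\<in>{0..t}. \<Sum>v\<in>level d m. (ae v)\<^sup>2) \<le> prob_space.variance M \<zeta> \<and>
         prob_space.variance M \<zeta> \<le> (\<Sum>m\<in>{0..t}. \<Sum>v\<in>level d m. (ae v)\<^sup>2)"
proof -
  interpret prob_space M by fact
  let ?Y = "\<lambda>k. case k of None \<Rightarrow> X0 | Some e \<Rightarrow> W e"
  let ?z = "replicate (d+1) 0"
  define b where "b k = (\<Sum>u\<in>level d t. a u * coef \<alpha> d u k)" for k
  have zeta: "\<zeta> = (\<lambda>\<omega>. \<Sum>k\<in>KT d t. b k * ?Y k \<omega>)"
  proof
    fix \<omega>
    have "\<zeta> \<omega> = (\<Sum>u\<in>level d t. a u * (\<Sum>k\<in>KT d t. coef \<alpha> d u k * ?Y k \<omega>))"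
      unfolding \<zeta>_def by (intro sum.cong refl, subst rep[of _ d t]) (auto simp: level_def)
    also have "\<dots> = (\<Sum>k\<in>KT d t. b k * ?Y k \<omega>)"
      by (simp add: b_def sum_distrib_left sum_distrib_right sum.swap[of _ "level d t"] mult.assoc)
    finally show "\<zeta> \<omega> = (\<Sum>k\<in>KT d t. b k * ?Y k \<omega>)" .
  qed
  have sub: "KT d t \<subseteq> insert None (Some ` edges d)"
    by (auto simp: KT_def ET_def edges_def)
  have ind: "indep_vars (\<lambda>_. borel) ?Y (KT d t)"
    by (rule indep_vars_subset[OF indep sub])
  have D: "distributed M lborel (?Y k) std_normal_density" if "k \<in> KT d t" for k
  proof (cases k)
    case None then show ?thesis using X0_normal by simp
  next
    case (Some e)
    then have "e \<in> edges d" using sub that by auto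
    then show ?thesis using W_normal Some by simp
  qed
  have var: "variance \<zeta> = (\<Sum>k\<in>KT d t. (b k)\<^sup>2)"
    unfolding zeta by (rule var_indep_normal_sum[OF finite_KT ind D])
  have bN: "b None = ae ?z"
    by (simp add: b_def ae_def coef_def mult.commute)
  have bS: "b (Some e) = \<alpha> (card (parents (snd e))) * ae (snd e)" for e
    by (cases e) (simp add: b_def ae_def coef_def sum_distrib_left mult_ac)
  have "(\<Sum>k\<in>KT d t. (b k)\<^sup>2) = (b None)\<^sup>2 + (\<Sum>e\<in>ET d t. (b (Some e))\<^sup>2)"
    unfolding KT_def by (subst sum.insert) (auto simp: finite_ET sum.reindex)
  also have "(\<Sum>e\<in>ET d t. (b (Some e))\<^sup>2) =
     (\<Sum>m\<in>{1..t}. \<Sum>w\<in>level d m. real (card (parents w)) * (\<alpha> (card (parents w)) * ae w)\<^sup>2)"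
    unfolding bS by (rule sum_ET)
  finally have A: "variance \<zeta> = (ae ?z)\<^sup>2 +
     (\<Sum>m\<in>{1..t}. \<Sum>w\<in>level d m. real (card (parents w)) * (\<alpha> (card (parents w)))\<^sup>2 * (ae w)\<^sup>2)"
    unfolding var bN by (simp add: power_mult_distrib mult.assoc)
  have split: "(\<Sum>m\<in>{0..t}. \<Sum>v\<in>level d m. (ae v)\<^sup>2) = (ae ?z)\<^sup>2 + (\<Sum>m\<in>{1..t}. \<Sum>v\<in>level d m. (ae v)\<^sup>2)"
    by (subst sum.atLeast_Suc_atMost) (simp_all add: level0)
  have cb: "1 / C\<^sup>2 \<le> 1" "\<And>p. p \<in> {1..d+1} \<Longrightarrow> 1 / C\<^sup>2 \<le> real p * (\<alpha> p)\<^sup>2"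
    "\<And>p. p \<in> {1..d+1} \<Longrightarrow> real p * (\<alpha> p)\<^sup>2 \<le> 1"
    using C_bounds[OF alpha C_def[THEN meta_eq_to_obj_eq]] by auto
  have rng: "card (parents w) \<in> {1..d+1}" if "m \<in> {1..t}" "w \<in> level d m" for m w
    using card_parents_range that by auto
  have low: "1 / C\<^sup>2 * (\<Sum>m\<in>{0..t}. \<Sum>v\<in>level d m. (ae v)\<^sup>2) \<le> variance \<zeta>"
  proof -
    have "1 / C\<^sup>2 * (\<Sum>m\<in>{0..t}. \<Sum>v\<in>level d m. (ae v)\<^sup>2)
        = 1 / C\<^sup>2 * (ae ?z)\<^sup>2 + (\<Sum>m\<in>{1..t}. \<Sum>v\<in>level d m. 1 / C\<^sup>2 * (ae v)\<^sup>2)"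
      unfolding split by (simp add: distrib_left sum_distrib_left)
    also have "\<dots> \<le> (ae ?z)\<^sup>2 +
       (\<Sum>m\<in>{1..t}. \<Sum>w\<in>level d m. real (card (parents w)) * (\<alpha> (card (parents w)))\<^sup>2 * (ae w)\<^sup>2)"
    proof (intro add_mono sum_mono)
      show "1 / C\<^sup>2 * (ae ?z)\<^sup>2 \<le> (ae ?z)\<^sup>2"
        using cb(1) by (intro mult_left_le_one_le) auto
      fix m w assume "m \<in> {1..t}" "w \<in> level d m"
      then show "1 / C\<^sup>2 * (ae w)\<^sup>2 \<le> real (card (parents w)) * (\<alpha> (card (parents w)))\<^sup>2 * (ae w)\<^sup>2"
        using cb(2)[OF rng] by (intro mult_right_mono) auto
    qed
    finally show ?thesis unfolding A .
  qed
  have up: "variance \<zeta> \<le> (\<Sum>m\<in>{0..t}. \<Sum>v\<in>level d m. (ae v)\<^sup>2)"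
    unfolding A split
  proof (intro add_mono sum_mono order_refl)
    fix m w assume "m \<in> {1..t}" "w \<in> level d m"
    then show "real (card (parents w)) * (\<alpha> (card (parents w)))\<^sup>2 * (ae w)\<^sup>2 \<le> (ae w)\<^sup>2"
      using cb(3)[OF rng] by (intro mult_left_le_one_le) auto
  qed
  show ?thesis using A low up by simp
qed

end
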